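(* Let $(X,I,T)$ be a relative monad in a 2-category $\mathcal{K}$ and $(S,S_0)$ a monad compatible with $I$. Then the assignments $d\mapsto\hat T$ with $\hat T(M,\mu)=(TM,T\mu\cdot dM)$, $\hat T(f)=Tf$, and $\hat T\mapsto\widehat{m_0}\cdot STs_0$ (where $\widehat{m_0}$ is the $S$-algebra structure of $\hat T(S_0,m_0)$) are mutually inverse bijections between relative distributive laws $d\colon ST\Rightarrow TS_0$ of $T$ over $(S,S_0)$ and liftings of $T$ to the algebras of $(S,S_0)$.
   Context: Conventions: 1-cells compose by juxtaposition; vertical composition of 2-cells is written $\cdot$; whiskering by juxtaposition. Relative monad: a relative monad $(X,I,T)$ in $\mathcal{K}$ consists of objects $X_0,X$, 1-cells $I,T\colon X_0\to X$, an operator $(-)^\dagger\colon[I,T]\to[T,T]$ (extension: for every span $A,B\colon O\to X_0$ a function sending 2-cells $IA\Rightarrow TB$ to 2-cells $TA\Rightarrow TB$, natural in $O$, $A$ and $B$) and a 2-cell $t\colon I\Rightarrow T$ such that $k^\dagger\cdot tA=k$, $(tA)^\dagger=1_{TA}$, $(l^\dagger\cdot k)^\dagger=l^\dagger\cdot k^\dagger$ for all $k\colon IA\Rightarrow TB$, $l\colon IB\Rightarrow TC$. Monad compatible with $I\colon X_0\to X$: a pair $(S,S_0)$ of monads $(X,S,m,s)$ and $(X_0,S_0,m_0,s_0)$ in $\mathcal{K}$ with $SI=IS_0$, $mI=Im_0$, $sI=Is_0$. Relative distributive law: a 2-cell $d\colon ST\Rightarrow TS_0$ such that (D1) $d\cdot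 mT=Tm_0\cdot dS_0\cdot Sd$; (D2) $d\cdot sT=Ts_0$; (D3) for all $A,B\colon O\to X_0$ and $f\colon IA\Rightarrow TB$, $dB\cdot S(f^\dagger)=(dB\cdot Sf)^\dagger\cdot dA$ (here $dB\cdot Sf\colon IS_0A=SIA\Rightarrow TS_0B$); (D4) $d\cdot St=tS_0$ as 2-cells $SI=IS_0\Rightarrow TS_0$. Indexed algebras: for a monad $(X,S,m,s)$ and object $K$, $S\text{-}\mathrm{Alg}(K)$ is the category whose objects are pairs $(M,\mu)$ with $M\colon K\to X$, $\mu\colon SM\Rightarrow M$, $\mu\cdot sM=1_M$, $\mu\cdot S\mu=\mu\cdot mM$, and whose morphisms $(M,\mu)\to(N,\nu)$ are 2-cells $f\colon M\Rightarrow N$ with $f\cdot\mu=\nu\cdot Sf$; this gives a 2-functor $S\text{-}\mathrm{Alg}(-)\colon\mathcal{K}^{op}\to\mathbf{Cat}$ by precomposition. Lifting to algebras: a lifting of $T$ to the algebras of $(S,S_0)$ is a 2-natural transformation $\hat T\colon S_0\text{-}\mathrm{Alg}(-)\to S\text{-}\mathrm{Alg}(-)$ of the form $\hat T(M,\mu)=(TM,\hat T\mu)$ on objects and $\hat T(f)=Tf$ on morphisms, carrying the relative monad structure over $I_*\colon(M,\mu)\mapsto(IM,I\mu)$ whose unit and extension are those of $T$, which means precisely: (a) for all $K$-indexed $S_0$-algebras $(M,\mu),(N,\nu)$ and every 2-cell $f\colon IM\Rightarrow TN$ with $f\cdot I\mu=\hat T\nu\cdot Sf$, one has $f^\dagger\cdot\hat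 T\mu=\hat T\nu\cdot Sf^\dagger$; (b) for every $(M,\mu)$, $tM\cdot I\mu=\hat T\mu\cdot StM$. *)

theory Defs
  imports Main
begin

text \<open>Objects of type 'o, 1-cells of type 'a, 2-cells of type 'c.
  comp1 g f is the composite "g f" (first f then g); vcomp b a is "b \<cdot> a";
  hcomp b a is the horizontal composite of b (outer) after a (inner).\<close>

record ('o,'a,'c) twocat =
  obs   :: "'o set"
  arrs  :: "'a set"
  cells :: "'c set"
  dom1  :: "'a \<Rightarrow> 'o"
  cod1  :: "'a \<Rightarrow> 'o"
  id1   :: "'o \<Rightarrow> 'a"
  comp1 :: "'a \<Rightarrow> 'a \<Rightarrow> 'a"
  src2  :: "'c \<Rightarrow> 'a"
  tgt2  :: "'c \<Rightarrow> 'a"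
  id2   :: "'a \<Rightarrow> 'c"
  vcomp :: "'c \<Rightarrow> 'c \<Rightarrow> 'c"
  hcomp :: "'c \<Rightarrow> 'c \<Rightarrow> 'c"

definition hom1 :: "('o,'a,'c) twocat \<Rightarrow> 'a \<Rightarrow> 'o \<Rightarrow> 'o \<Rightarrow> bool" where
  "hom1 C f a b \<longleftrightarrow> f \<in> arrs C \<and> dom1 C f = a \<and> cod1 C f = b"

definition cell2 :: "('o,'a,'c) twocat \<Rightarrow> 'c \<Rightarrow> 'a \<Rightarrow> 'a \<Rightarrow> bool" where
  "cell2 C \<alpha> f g \<longleftrightarrow> \<alpha> \<in> cells C \<and> src2 C \<alpha> = f \<and> tgt2 C \<alpha> = g"

definition twocat :: "('o,'a,'c) twocat \<Rightarrow> bool" where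
  "twocat C \<longleftrightarrow>
    (\<forall>f\<in>arrs C. dom1 C f \<in> obs C \<and> cod1 C f \<in> obs C)
  \<and> (\<forall>a\<in>obs C. hom1 C (id1 C a) a a)
  \<and> (\<forall>f\<in>arrs C. \<forall>g\<in>arrs C. cod1 C f = dom1 C g \<longrightarrow>
        hom1 C (comp1 C g f) (dom1 C f) (cod1 C g))
  \<and> (\<forall>f\<in>arrs C. \<forall>g\<in>arrs C. \<forall>h\<in>arrs C. cod1 C f = dom1 C g \<and> cod1 C g = dom1 C h \<longrightarrow>
        comp1 C h (comp1 C g f) = comp1 C (comp1 C h g) f)
  \<and> (\<forall>f\<in>arrs C. comp1 C (id1 C (cod1 C f)) f = f \<and> comp1 C f (id1 C (dom1 C f)) = f)
  \<and> (\<forall>\<alpha>\<in>cells C. src2 C \<alpha> \<in> arrs C \<and> tgt2 C \<alpha> \<in> arrs C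
        \<and> dom1 C (src2 C \<alpha>) = dom1 C (tgt2 C \<alpha>) \<and> cod1 C (src2 C \<alpha>) = cod1 C (tgt2 C \<alpha>))
  \<and> (\<forall>f\<in>arrs C. cell2 C (id2 C f) f f)
  \<and> (\<forall>\<alpha>\<in>cells C. \<forall>\<beta>\<in>cells C. tgt2 C \<alpha> = src2 C \<beta> \<longrightarrow>
        cell2 C (vcomp C \<beta> \<alpha>) (src2 C \<alpha>) (tgt2 C \<beta>))
  \<and> (\<forall>\<alpha>\<in>cells C. \<forall>\<beta>\<in>cells C. \<forall>\<gamma>\<in>cells C. tgt2 C \<alpha> = src2 C \<beta> \<and> tgt2 C \<beta> = src2 C \<gamma> \<longrightarrow>
        vcomp C \<gamma> (vcomp C \<beta> \<alpha>) = vcomp C (vcomp C \<gamma> \<beta>) \<alpha>)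
  \<and> (\<forall>\<alpha>\<in>cells C. vcomp C (id2 C (tgt2 C \<alpha>)) \<alpha> = \<alpha> \<and> vcomp C \<alpha> (id2 C (src2 C \<alpha>)) = \<alpha>)
  \<and> (\<forall>\<alpha>\<in>cells C. \<forall>\<beta>\<in>cells C. cod1 C (src2 C \<alpha>) = dom1 C (src2 C \<beta>) \<longrightarrow>
        cell2 C (hcomp C \<beta> \<alpha>) (comp1 C (src2 C \<beta>) (src2 C \<alpha>)) (comp1 C (tgt2 C \<beta>) (tgt2 C \<alpha>)))
  \<and> (\<forall>\<alpha>\<in>cells C. \<forall>\<beta>\<in>cells C. \<forall>\<gamma>\<in>cells C.
        cod1 C (src2 C \<alpha>) = dom1 C (src2 C \<beta>) \<and> cod1 C (src2 C \<beta>) = dom1 C (src2 C \<gamma>) \<longrightarrow>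
        hcomp C \<gamma> (hcomp C \<beta> \<alpha>) = hcomp C (hcomp C \<gamma> \<beta>) \<alpha>)
  \<and> (\<forall>\<alpha>\<in>cells C. hcomp C (id2 C (id1 C (cod1 C (src2 C \<alpha>)))) \<alpha> = \<alpha>
        \<and> hcomp C \<alpha> (id2 C (id1 C (dom1 C (src2 C \<alpha>)))) = \<alpha>)
  \<and> (\<forall>f\<in>arrs C. \<forall>g\<in>arrs C. cod1 C f = dom1 C g \<longrightarrow>
        hcomp C (id2 C g) (id2 C f) = id2 C (comp1 C g f))
  \<and> (\<forall>\<alpha>\<in>cells C. \<forall>\<alpha>'\<in>cells C. \<forall>\<beta>\<in>cells C. \<forall>\<beta>'\<in>cells C.
        tgt2 C \<alpha> = src2 C \<alpha>' \<and> tgt2 C \<beta> = src2 C \<beta>' \<and> cod1 C (src2 C \<alpha>) = dom1 C (src2 C \<beta>) \<longrightarrow>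
        hcomp C (vcomp C \<beta>' \<beta>) (vcomp C \<alpha>' \<alpha>) = vcomp C (hcomp C \<beta>' \<alpha>') (hcomp C \<beta> \<alpha>))"

text \<open>Whiskering: wl C F \<alpha> is "F\<alpha>", wr C \<alpha> F is "\<alpha>F".\<close>
definition wl :: "('o,'a,'c) twocat \<Rightarrow> 'a \<Rightarrow> 'c \<Rightarrow> 'c" where
  "wl C F \<alpha> = hcomp C (id2 C F) \<alpha>"

definition wr :: "('o,'a,'c) twocat \<Rightarrow> 'c \<Rightarrow> 'a \<Rightarrow> 'c" where
  "wr C \<alpha> F = hcomp C \<alpha> (id2 C F)"

definition monad :: "('o,'a,'c) twocat \<Rightarrow> 'o \<Rightarrow> 'a \<Rightarrow> 'c \<Rightarrow> 'c \<Rightarrow> bool" where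
  "monad C X S m s \<longleftrightarrow>
     hom1 C S X X \<and> cell2 C m (comp1 C S S) S \<and> cell2 C s (id1 C X) S
   \<and> vcomp C m (wr C m S) = vcomp C m (wl C S m)
   \<and> vcomp C m (wr C s S) = id2 C S
   \<and> vcomp C m (wl C S s) = id2 C S"

definition span :: "('o,'a,'c) twocat \<Rightarrow> 'o \<Rightarrow> 'a \<Rightarrow> 'a \<Rightarrow> bool" where
  "span C X0 A B \<longleftrightarrow> A \<in> arrs C \<and> B \<in> arrs C \<and> cod1 C A = X0 \<and> cod1 C B = X0
      \<and> dom1 C A = dom1 C B"

text \<open>Relative monad (X, I, T) with X0 the domain of I and T; ext A B k is "k dagger" for
  the span A, B.\<close>
definition relmonad :: "('o,'a,'c) twocat \<Rightarrow> 'o \<Rightarrow> 'o \<Rightarrow> 'a \<Rightarrow> 'a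
     \<Rightarrow> ('a \<Rightarrow> 'a \<Rightarrow> 'c \<Rightarrow> 'c) \<Rightarrow> 'c \<Rightarrow> bool" where
  "relmonad C X0 X I T ext t \<longleftrightarrow>
     hom1 C I X0 X \<and> hom1 C T X0 X \<and> cell2 C t I T
   \<and> (\<forall>A B k. span C X0 A B \<and> cell2 C k (comp1 C I A) (comp1 C T B) \<longrightarrow>
        cell2 C (ext A B k) (comp1 C T A) (comp1 C T B))
   \<comment> \<open>naturality in O\<close>
   \<and> (\<forall>A B k F. span C X0 A B \<and> cell2 C k (comp1 C I A) (comp1 C T B)
        \<and> F \<in> arrs C \<and> cod1 C F = dom1 C A \<longrightarrow>
        ext (comp1 C A F) (comp1 C B F) (wr C k F) = wr C (ext A B k) F)
   \<comment> \<open>naturality in A and B\<close>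
   \<and> (\<forall>A A' B B' \<alpha> \<beta> k. span C X0 A B \<and> span C X0 A' B' \<and> dom1 C A = dom1 C A'
        \<and> cell2 C \<alpha> A' A \<and> cell2 C \<beta> B B' \<and> cell2 C k (comp1 C I A) (comp1 C T B) \<longrightarrow>
        ext A' B' (vcomp C (wl C T \<beta>) (vcomp C k (wl C I \<alpha>)))
          = vcomp C (wl C T \<beta>) (vcomp C (ext A B k) (wl C T \<alpha>)))
   \<comment> \<open>laws\<close>
   \<and> (\<forall>A B k. span C X0 A B \<and> cell2 C k (comp1 C I A) (comp1 C T B) \<longrightarrow>
        vcomp C (ext A B k) (wr C t A) = k)
   \<and> (\<forall>A. A \<in> arrs C \<and> cod1 C A = X0 \<longrightarrow> ext A A (wr C t A) = id2 C (comp1 C T A))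
   \<and> (\<forall>A B D k l. span C X0 A B \<and> span C X0 B D
        \<and> cell2 C k (comp1 C I A) (comp1 C T B) \<and> cell2 C l (comp1 C I B) (comp1 C T D) \<longrightarrow>
        ext A D (vcomp C (ext B D l) k) = vcomp C (ext B D l) (ext A B k))"

definition compatible :: "('o,'a,'c) twocat \<Rightarrow> 'a \<Rightarrow> 'a \<Rightarrow> 'c \<Rightarrow> 'c \<Rightarrow> 'a \<Rightarrow> 'c \<Rightarrow> 'c \<Rightarrow> bool" where
  "compatible C I S m s S0 m0 s0 \<longleftrightarrow>
     comp1 C S I = comp1 C I S0 \<and> wr C m I = wl C I m0 \<and> wr C s I = wl C I s0"

definition reldist :: "('o,'a,'c) twocat \<Rightarrow> 'o \<Rightarrow> 'a \<Rightarrow> 'a \<Rightarrow> ('a \<Rightarrow> 'a \<Rightarrow> 'c \<Rightarrow> 'c) \<Rightarrow> 'c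
     \<Rightarrow> 'a \<Rightarrow> 'c \<Rightarrow> 'c \<Rightarrow> 'a \<Rightarrow> 'c \<Rightarrow> 'c \<Rightarrow> 'c \<Rightarrow> bool" where
  "reldist C X0 I T ext t S m s S0 m0 s0 d \<longleftrightarrow>
     cell2 C d (comp1 C S T) (comp1 C T S0)
   \<and> vcomp C d (wr C m T) = vcomp C (wl C T m0) (vcomp C (wr C d S0) (wl C S d))
   \<and> vcomp C d (wr C s T) = wl C T s0
   \<and> (\<forall>A B f. span C X0 A B \<and> cell2 C f (comp1 C I A) (comp1 C T B) \<longrightarrow>
        vcomp C (wr C d B) (wl C S (ext A B f))
          = vcomp C (ext (comp1 C S0 A) (comp1 C S0 B) (vcomp C (wr C d B) (wl C S f))) (wr C d A))
   \<and> vcomp C d (wl C S t) = wr C t S0"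

text \<open>(M, \<mu>) is an algebra of the monad (X,S,m,s) indexed by the object dom1 C M.\<close>
definition isalg :: "('o,'a,'c) twocat \<Rightarrow> 'o \<Rightarrow> 'a \<Rightarrow> 'c \<Rightarrow> 'c \<Rightarrow> 'a \<Rightarrow> 'c \<Rightarrow> bool" where
  "isalg C X S m s M \<mu> \<longleftrightarrow>
     M \<in> arrs C \<and> cod1 C M = X \<and> cell2 C \<mu> (comp1 C S M) M
   \<and> vcomp C \<mu> (wr C s M) = id2 C M
   \<and> vcomp C \<mu> (wl C S \<mu>) = vcomp C \<mu> (wr C m M)"

definition algmor :: "('o,'a,'c) twocat \<Rightarrow> 'a \<Rightarrow> 'a \<Rightarrow> 'c \<Rightarrow> 'a \<Rightarrow> 'c \<Rightarrow> 'c \<Rightarrow> bool" where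
  "algmor C S M \<mu> N \<nu> f \<longleftrightarrow> cell2 C f M N \<and> vcomp C f \<mu> = vcomp C \<nu> (wl C S f)"

text \<open>A lifting is represented by the assignment L M \<mu> = T-hat(mu) of S-algebra structures
  on TM, for every indexed S0-algebra (M,\<mu>); it is taken extensional (undefined
  off S0-algebras). On morphisms the lifting is forced to be f \<mapsto> Tf.\<close>
definition lifting :: "('o,'a,'c) twocat \<Rightarrow> 'o \<Rightarrow> 'o \<Rightarrow> 'a \<Rightarrow> 'a \<Rightarrow> ('a \<Rightarrow> 'a \<Rightarrow> 'c \<Rightarrow> 'c) \<Rightarrow> 'c
     \<Rightarrow> 'a \<Rightarrow> 'c \<Rightarrow> 'c \<Rightarrow> 'a \<Rightarrow> 'c \<Rightarrow> 'c \<Rightarrow> ('a \<Rightarrow> 'c \<Rightarrow> 'c) \<Rightarrow> bool" where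
  "lifting C X0 X I T ext t S m s S0 m0 s0 L \<longleftrightarrow>
     (\<forall>M \<mu>. \<not> isalg C X0 S0 m0 s0 M \<mu> \<longrightarrow> L M \<mu> = undefined)
   \<comment> \<open>objects go to S-algebras (TM, L M \<mu>)\<close>
   \<and> (\<forall>M \<mu>. isalg C X0 S0 m0 s0 M \<mu> \<longrightarrow> isalg C X S m s (comp1 C T M) (L M \<mu>))
   \<comment> \<open>functoriality: Tf is an S-algebra morphism\<close>
   \<and> (\<forall>M \<mu> N \<nu> f. isalg C X0 S0 m0 s0 M \<mu> \<and> isalg C X0 S0 m0 s0 N \<nu>
        \<and> algmor C S0 M \<mu> N \<nu> f \<longrightarrow>
        algmor C S (comp1 C T M) (L M \<mu>) (comp1 C T N) (L N \<nu>) (wl C T f))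
   \<comment> \<open>2-naturality (reindexing along 1-cells F : K' \<rightarrow> K)\<close>
   \<and> (\<forall>M \<mu> F. isalg C X0 S0 m0 s0 M \<mu> \<and> F \<in> arrs C \<and> cod1 C F = dom1 C M \<longrightarrow>
        L (comp1 C M F) (wr C \<mu> F) = wr C (L M \<mu>) F)
   \<comment> \<open>(a)\<close>
   \<and> (\<forall>M \<mu> N \<nu> f. isalg C X0 S0 m0 s0 M \<mu> \<and> isalg C X0 S0 m0 s0 N \<nu> \<and> dom1 C M = dom1 C N
        \<and> cell2 C f (comp1 C I M) (comp1 C T N)
        \<and> vcomp C f (wl C I \<mu>) = vcomp C (L N \<nu>) (wl C S f) \<longrightarrow>
        vcomp C (ext M N f) (L M \<mu>) = vcomp C (L N \<nu>) (wl C S (ext M N f)))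
   \<comment> \<open>(b)\<close>
   \<and> (\<forall>M \<mu>. isalg C X0 S0 m0 s0 M \<mu> \<longrightarrow>
        vcomp C (wr C t M) (wl C I \<mu>) = vcomp C (L M \<mu>) (wl C S (wr C t M)))"

definition lift_of_dist :: "('o,'a,'c) twocat \<Rightarrow> 'o \<Rightarrow> 'a \<Rightarrow> 'a \<Rightarrow> 'c \<Rightarrow> 'c \<Rightarrow> 'c
     \<Rightarrow> ('a \<Rightarrow> 'c \<Rightarrow> 'c)" where
  "lift_of_dist C X0 T S0 m0 s0 d =
     (\<lambda>M \<mu>. if isalg C X0 S0 m0 s0 M \<mu> then vcomp C (wl C T \<mu>) (wr C d M) else undefined)"

definition dist_of_lift :: "('o,'a,'c) twocat \<Rightarrow> 'a \<Rightarrow> 'a \<Rightarrow> 'a \<Rightarrow> 'c \<Rightarrow> 'c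
     \<Rightarrow> ('a \<Rightarrow> 'c \<Rightarrow> 'c) \<Rightarrow> 'c" where
  "dist_of_lift C S T S0 m0 s0 L = vcomp C (L S0 m0) (wl C (comp1 C S T) s0)"

end

theory Submission
  imports Defs
begin


locale tc = fixes C :: "('o,'a,'c) twocat" assumes tc: "twocat C"
begin
lemmas A = tc[unfolded twocat_def]
lemmas c1 = A[THEN conjunct1]
lemmas c2 = A[THEN conjunct2, THEN conjunct1]
lemmas c3 = A[THEN conjunct2, THEN conjunct2, THEN conjunct1]
lemmas c4 = A[THEN conjunct2, THEN conjunct2, THEN conjunct2, THEN conjunct1]
lemmas c5 = A[THEN conjunct2, THEN conjunct2, THEN conjunct2, THEN conjunct2, THEN conjunct1]
lemmas c6 = A[THEN conjunct2, THEN conjunct2, THEN conjunct2, THEN conjunct2, THEN conjunct2, THEN conjunct1]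
lemmas c7 = A[THEN conjunct2, THEN conjunct2, THEN conjunct2, THEN conjunct2, THEN conjunct2, THEN conjunct2, THEN conjunct1]
lemmas c8 = A[THEN conjunct2, THEN conjunct2, THEN conjunct2, THEN conjunct2, THEN conjunct2, THEN conjunct2, THEN conjunct2, THEN conjunct1]
lemmas c9 = A[THEN conjunct2, THEN conjunct2, THEN conjunct2, THEN conjunct2, THEN conjunct2, THEN conjunct2, THEN conjunct2, THEN conjunct2, THEN conjunct1]
lemmas c10 = A[THEN conjunct2, THEN conjunct2, THEN conjunct2, THEN conjunct2, THEN conjunct2, THEN conjunct2, THEN conjunct2, THEN conjunct2, THEN conjunct2, THEN conjunct1]
lemmas c11 = A[THEN conjunct2, THEN conjunct2, THEN conjunct2, THEN conjunct2, THEN conjunct2, THEN conjunct2, THEN conjunct2, THEN conjunct2, THEN conjunct2, THEN conjunct2, THEN conjunct1]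
lemmas c12 = A[THEN conjunct2, THEN conjunct2, THEN conjunct2, THEN conjunct2, THEN conjunct2, THEN conjunct2, THEN conjunct2, THEN conjunct2, THEN conjunct2, THEN conjunct2, THEN conjunct2, THEN conjunct1]
lemmas c13 = A[THEN conjunct2, THEN conjunct2, THEN conjunct2, THEN conjunct2, THEN conjunct2, THEN conjunct2, THEN conjunct2, THEN conjunct2, THEN conjunct2, THEN conjunct2, THEN conjunct2, THEN conjunct2, THEN conjunct1]
lemmas c14 = A[THEN conjunct2, THEN conjunct2, THEN conjunct2, THEN conjunct2, THEN conjunct2, THEN conjunct2, THEN conjunct2, THEN conjunct2, THEN conjunct2, THEN conjunct2, THEN conjunct2, THEN conjunct2, THEN conjunct2, THEN conjunct1]
lemmas c15 = A[THEN conjunct2, THEN conjunct2, THEN conjunct2, THEN conjunct2, THEN conjunct2, THEN conjunct2, THEN conjunct2, THEN conjunct2, THEN conjunct2, THEN conjunct2, THEN conjunct2, THEN conjunct2, THEN conjunct2, THEN conjunct2]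

lemma obs_dom[simp]: "f \<in> arrs C \<Longrightarrow> dom1 C f \<in> obs C"
  and obs_cod[simp]: "f \<in> arrs C \<Longrightarrow> cod1 C f \<in> obs C"
  using c1 by auto

lemma id1_simps[simp]: "a \<in> obs C \<Longrightarrow> id1 C a \<in> arrs C"
  "a \<in> obs C \<Longrightarrow> dom1 C (id1 C a) = a" "a \<in> obs C \<Longrightarrow> cod1 C (id1 C a) = a"
  using c2 unfolding hom1_def by auto

lemma comp1_simps[simp]:
  "f \<in> arrs C \<Longrightarrow> g \<in> arrs C \<Longrightarrow> cod1 C f = dom1 C g \<Longrightarrow> comp1 C g f \<in> arrs C"
  "f \<in> arrs C \<Longrightarrow> g \<in> arrs C \<Longrightarrow> cod1 C f = dom1 C g \<Longrightarrow> dom1 C (comp1 C g f) = dom1 C f"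
  "f \<in> arrs C \<Longrightarrow> g \<in> arrs C \<Longrightarrow> cod1 C f = dom1 C g \<Longrightarrow> cod1 C (comp1 C g f) = cod1 C g"
  using c3 unfolding hom1_def by auto

lemma comp1_assoc[simp]:
  "f \<in> arrs C \<Longrightarrow> g \<in> arrs C \<Longrightarrow> h \<in> arrs C \<Longrightarrow> cod1 C f = dom1 C g \<Longrightarrow> cod1 C g = dom1 C h
   \<Longrightarrow> comp1 C (comp1 C h g) f = comp1 C h (comp1 C g f)"
  using c4 by metis

lemma comp1_idl[simp]: "f \<in> arrs C \<Longrightarrow> cod1 C f = a \<Longrightarrow> comp1 C (id1 C a) f = f"
  and comp1_idr[simp]: "f \<in> arrs C \<Longrightarrow> dom1 C f = a \<Longrightarrow> comp1 C f (id1 C a) = f"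
  using c5 by auto

lemma cell_simps[simp]: "\<alpha> \<in> cells C \<Longrightarrow> src2 C \<alpha> \<in> arrs C"
  "\<alpha> \<in> cells C \<Longrightarrow> tgt2 C \<alpha> \<in> arrs C"
  "\<alpha> \<in> cells C \<Longrightarrow> dom1 C (tgt2 C \<alpha>) = dom1 C (src2 C \<alpha>)"
  "\<alpha> \<in> cells C \<Longrightarrow> cod1 C (tgt2 C \<alpha>) = cod1 C (src2 C \<alpha>)"
  using c6 by auto

lemma id2_simps[simp]: "f \<in> arrs C \<Longrightarrow> id2 C f \<in> cells C"
  "f \<in> arrs C \<Longrightarrow> src2 C (id2 C f) = f" "f \<in> arrs C \<Longrightarrow> tgt2 C (id2 C f) = f"
  using c7 unfolding cell2_def by auto

lemma vcomp_simps[simp]: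
  "\<alpha> \<in> cells C \<Longrightarrow> \<beta> \<in> cells C \<Longrightarrow> tgt2 C \<alpha> = src2 C \<beta> \<Longrightarrow> vcomp C \<beta> \<alpha> \<in> cells C"
  "\<alpha> \<in> cells C \<Longrightarrow> \<beta> \<in> cells C \<Longrightarrow> tgt2 C \<alpha> = src2 C \<beta> \<Longrightarrow> src2 C (vcomp C \<beta> \<alpha>) = src2 C \<alpha>"
  "\<alpha> \<in> cells C \<Longrightarrow> \<beta> \<in> cells C \<Longrightarrow> tgt2 C \<alpha> = src2 C \<beta> \<Longrightarrow> tgt2 C (vcomp C \<beta> \<alpha>) = tgt2 C \<beta>"
  using c8 unfolding cell2_def by auto

lemma vassoc[simp]: "\<alpha> \<in> cells C \<Longrightarrow> \<beta> \<in> cells C \<Longrightarrow> \<gamma> \<in> cells C \<Longrightarrow> tgt2 C \<alpha> = src2 C \<beta> \<Longrightarrow> tgt2 C \<beta> = src2 C \<gamma>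
   \<Longrightarrow> vcomp C (vcomp C \<gamma> \<beta>) \<alpha> = vcomp C \<gamma> (vcomp C \<beta> \<alpha>)"
  using c9 by metis

lemma vid_l[simp]: "\<alpha> \<in> cells C \<Longrightarrow> tgt2 C \<alpha> = f \<Longrightarrow> vcomp C (id2 C f) \<alpha> = \<alpha>"
  and vid_r[simp]: "\<alpha> \<in> cells C \<Longrightarrow> src2 C \<alpha> = f \<Longrightarrow> vcomp C \<alpha> (id2 C f) = \<alpha>"
  using c10 by auto

lemma hcomp_simps:
  "\<alpha> \<in> cells C \<Longrightarrow> \<beta> \<in> cells C \<Longrightarrow> cod1 C (src2 C \<alpha>) = dom1 C (src2 C \<beta>) \<Longrightarrow> hcomp C \<beta> \<alpha> \<in> cells C"
  "\<alpha> \<in> cells C \<Longrightarrow> \<beta> \<in> cells C \<Longrightarrow> cod1 C (src2 C \<alpha>) = dom1 C (src2 C \<beta>) \<Longrightarrow> src2 C (hcomp C \<beta> \<alpha>) = comp1 C (src2 C \<beta>) (src2 C \<alpha>)"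
  "\<alpha> \<in> cells C \<Longrightarrow> \<beta> \<in> cells C \<Longrightarrow> cod1 C (src2 C \<alpha>) = dom1 C (src2 C \<beta>) \<Longrightarrow> tgt2 C (hcomp C \<beta> \<alpha>) = comp1 C (tgt2 C \<beta>) (tgt2 C \<alpha>)"
  using c11 unfolding cell2_def by auto

lemma hassoc: "\<alpha> \<in> cells C \<Longrightarrow> \<beta> \<in> cells C \<Longrightarrow> \<gamma> \<in> cells C \<Longrightarrow>
        cod1 C (src2 C \<alpha>) = dom1 C (src2 C \<beta>) \<Longrightarrow> cod1 C (src2 C \<beta>) = dom1 C (src2 C \<gamma>) \<Longrightarrow>
        hcomp C \<gamma> (hcomp C \<beta> \<alpha>) = hcomp C (hcomp C \<gamma> \<beta>) \<alpha>"
  using c12 by metis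

lemma hunit: "\<alpha> \<in> cells C \<Longrightarrow> hcomp C (id2 C (id1 C (cod1 C (src2 C \<alpha>)))) \<alpha> = \<alpha>"
   "\<alpha> \<in> cells C \<Longrightarrow> hcomp C \<alpha> (id2 C (id1 C (dom1 C (src2 C \<alpha>)))) = \<alpha>"
  using c13 by auto

lemma hid: "f \<in> arrs C \<Longrightarrow> g \<in> arrs C \<Longrightarrow> cod1 C f = dom1 C g \<Longrightarrow>
        hcomp C (id2 C g) (id2 C f) = id2 C (comp1 C g f)"
  using c14 by auto

lemma interch: "\<alpha> \<in> cells C \<Longrightarrow> \<alpha>' \<in> cells C \<Longrightarrow> \<beta> \<in> cells C \<Longrightarrow> \<beta>' \<in> cells C \<Longrightarrow>
        tgt2 C \<alpha> = src2 C \<alpha>' \<Longrightarrow> tgt2 C \<beta> = src2 C \<beta>' \<Longrightarrow> cod1 C (src2 C \<alpha>) = dom1 C (src2 C \<beta>) \<Longrightarrow>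
        hcomp C (vcomp C \<beta>' \<beta>) (vcomp C \<alpha>' \<alpha>) = vcomp C (hcomp C \<beta>' \<alpha>') (hcomp C \<beta> \<alpha>)"
  using c15 by metis

lemma wl_simps[simp]:
  "F \<in> arrs C \<Longrightarrow> \<alpha> \<in> cells C \<Longrightarrow> cod1 C (src2 C \<alpha>) = dom1 C F \<Longrightarrow> wl C F \<alpha> \<in> cells C"
  "F \<in> arrs C \<Longrightarrow> \<alpha> \<in> cells C \<Longrightarrow> cod1 C (src2 C \<alpha>) = dom1 C F \<Longrightarrow> src2 C (wl C F \<alpha>) = comp1 C F (src2 C \<alpha>)"
  "F \<in> arrs C \<Longrightarrow> \<alpha> \<in> cells C \<Longrightarrow> cod1 C (src2 C \<alpha>) = dom1 C F \<Longrightarrow> tgt2 C (wl C F \<alpha>) = comp1 C F (tgt2 C \<alpha>)"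
  unfolding wl_def using hcomp_simps[of \<alpha> "id2 C F"] by auto

lemma wr_simps[simp]:
  "F \<in> arrs C \<Longrightarrow> \<alpha> \<in> cells C \<Longrightarrow> cod1 C F = dom1 C (src2 C \<alpha>) \<Longrightarrow> wr C \<alpha> F \<in> cells C"
  "F \<in> arrs C \<Longrightarrow> \<alpha> \<in> cells C \<Longrightarrow> cod1 C F = dom1 C (src2 C \<alpha>) \<Longrightarrow> src2 C (wr C \<alpha> F) = comp1 C (src2 C \<alpha>) F"
  "F \<in> arrs C \<Longrightarrow> \<alpha> \<in> cells C \<Longrightarrow> cod1 C F = dom1 C (src2 C \<alpha>) \<Longrightarrow> tgt2 C (wr C \<alpha> F) = comp1 C (tgt2 C \<alpha>) F"
  unfolding wr_def using hcomp_simps[of "id2 C F" \<alpha>] by auto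

lemma wl_vcomp[simp]: "F \<in> arrs C \<Longrightarrow> \<alpha> \<in> cells C \<Longrightarrow> \<beta> \<in> cells C \<Longrightarrow> tgt2 C \<alpha> = src2 C \<beta> \<Longrightarrow>
   cod1 C (src2 C \<alpha>) = dom1 C F \<Longrightarrow> wl C F (vcomp C \<beta> \<alpha>) = vcomp C (wl C F \<beta>) (wl C F \<alpha>)"
  unfolding wl_def using interch[of \<alpha> \<beta> "id2 C F" "id2 C F"] by simp

lemma wr_vcomp[simp]: "F \<in> arrs C \<Longrightarrow> \<alpha> \<in> cells C \<Longrightarrow> \<beta> \<in> cells C \<Longrightarrow> tgt2 C \<alpha> = src2 C \<beta> \<Longrightarrow>
   cod1 C F = dom1 C (src2 C \<alpha>) \<Longrightarrow> wr C (vcomp C \<beta> \<alpha>) F = vcomp C (wr C \<beta> F) (wr C \<alpha> F)"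
  unfolding wr_def using interch[of "id2 C F" "id2 C F" \<alpha> \<beta>] by simp

lemma wl_id2[simp]: "F \<in> arrs C \<Longrightarrow> G \<in> arrs C \<Longrightarrow> cod1 C G = dom1 C F \<Longrightarrow> wl C F (id2 C G) = id2 C (comp1 C F G)"
  unfolding wl_def by (simp add: hid)

lemma wr_id2[simp]: "F \<in> arrs C \<Longrightarrow> G \<in> arrs C \<Longrightarrow> cod1 C F = dom1 C G \<Longrightarrow> wr C (id2 C G) F = id2 C (comp1 C G F)"
  unfolding wr_def by (simp add: hid)

lemma wl_wl[simp]: "F \<in> arrs C \<Longrightarrow> G \<in> arrs C \<Longrightarrow> \<alpha> \<in> cells C \<Longrightarrow> cod1 C G = dom1 C F \<Longrightarrow>
  cod1 C (src2 C \<alpha>) = dom1 C G \<Longrightarrow> wl C F (wl C G \<alpha>) = wl C (comp1 C F G) \<alpha>"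
  unfolding wl_def by (simp add: hassoc hid)

lemma wr_wr[simp]: "F \<in> arrs C \<Longrightarrow> G \<in> arrs C \<Longrightarrow> \<alpha> \<in> cells C \<Longrightarrow> cod1 C G = dom1 C F \<Longrightarrow>
  cod1 C F = dom1 C (src2 C \<alpha>) \<Longrightarrow> wr C (wr C \<alpha> F) G = wr C \<alpha> (comp1 C F G)"
  unfolding wr_def by (simp add: hassoc[of "id2 C G" "id2 C F" \<alpha>, symmetric] hid)

lemma wr_wl[simp]: "F \<in> arrs C \<Longrightarrow> G \<in> arrs C \<Longrightarrow> \<alpha> \<in> cells C \<Longrightarrow> cod1 C (src2 C \<alpha>) = dom1 C F \<Longrightarrow>
  cod1 C G = dom1 C (src2 C \<alpha>) \<Longrightarrow> wr C (wl C F \<alpha>) G = wl C F (wr C \<alpha> G)"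
  unfolding wr_def wl_def by (simp add: hassoc[of "id2 C G" \<alpha> "id2 C F", symmetric] hcomp_simps)

lemma wl_id1[simp]: "\<alpha> \<in> cells C \<Longrightarrow> cod1 C (src2 C \<alpha>) = a \<Longrightarrow> wl C (id1 C a) \<alpha> = \<alpha>"
  unfolding wl_def using hunit by auto

lemma wr_id1[simp]: "\<alpha> \<in> cells C \<Longrightarrow> dom1 C (src2 C \<alpha>) = a \<Longrightarrow> wr C \<alpha> (id1 C a) = \<alpha>"
  unfolding wr_def using hunit by auto

lemma xch: "\<alpha> \<in> cells C \<Longrightarrow> \<beta> \<in> cells C \<Longrightarrow> cod1 C (src2 C \<alpha>) = dom1 C (src2 C \<beta>) \<Longrightarrow>
  vcomp C (wl C (tgt2 C \<beta>) \<alpha>) (wr C \<beta> (src2 C \<alpha>)) = vcomp C (wr C \<beta> (tgt2 C \<alpha>)) (wl C (src2 C \<beta>) \<alpha>)"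
proof -
  assume a: "\<alpha> \<in> cells C" "\<beta> \<in> cells C" "cod1 C (src2 C \<alpha>) = dom1 C (src2 C \<beta>)"
  have "vcomp C (wl C (tgt2 C \<beta>) \<alpha>) (wr C \<beta> (src2 C \<alpha>)) = hcomp C \<beta> \<alpha>"
    unfolding wl_def wr_def using a interch[of "id2 C (src2 C \<alpha>)" \<alpha> \<beta> "id2 C (tgt2 C \<beta>)"] by simp
  moreover have "vcomp C (wr C \<beta> (tgt2 C \<alpha>)) (wl C (src2 C \<beta>) \<alpha>) = hcomp C \<beta> \<alpha>"
    unfolding wl_def wr_def using a interch[of \<alpha> "id2 C (tgt2 C \<alpha>)" "id2 C (src2 C \<beta>)" \<beta>] by simp
  ultimately show ?thesis by simp
qed

end


locale setting = tc C for C :: "('o,'a,'c) twocat" +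
  fixes X0 X I T ext t S m s S0 m0 s0
  assumes X0: "X0 \<in> obs C" and X: "X \<in> obs C"
    and rm: "relmonad C X0 X I T ext t"
    and mS: "monad C X S m s" and mS0: "monad C X0 S0 m0 s0"
    and cp: "compatible C I S m s S0 m0 s0"
begin

lemma ob_simps[simp]: "X0 \<in> obs C" "X \<in> obs C" using X0 X by auto

lemma arr_simps[simp]:
  "I \<in> arrs C" "dom1 C I = X0" "cod1 C I = X"
  "T \<in> arrs C" "dom1 C T = X0" "cod1 C T = X"
  "S \<in> arrs C" "dom1 C S = X" "cod1 C S = X"
  "S0 \<in> arrs C" "dom1 C S0 = X0" "cod1 C S0 = X0"
  using rm mS mS0 unfolding relmonad_def monad_def hom1_def by auto

lemma cellc_simps[simp]:
  "t \<in> cells C" "src2 C t = I" "tgt2 C t = T"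
  "m \<in> cells C" "src2 C m = comp1 C S S" "tgt2 C m = S"
  "s \<in> cells C" "src2 C s = id1 C X" "tgt2 C s = S"
  "m0 \<in> cells C" "src2 C m0 = comp1 C S0 S0" "tgt2 C m0 = S0"
  "s0 \<in> cells C" "src2 C s0 = id1 C X0" "tgt2 C s0 = S0"
  using rm mS mS0 unfolding relmonad_def monad_def cell2_def by auto

lemma SI[simp]: "comp1 C S I = comp1 C I S0"
  using cp unfolding compatible_def by auto
lemma SIA[simp]: "A \<in> arrs C \<Longrightarrow> cod1 C A = X0 \<Longrightarrow> comp1 C S (comp1 C I A) = comp1 C I (comp1 C S0 A)"
  using comp1_assoc[of A I S] comp1_assoc[of A S0 I] by simp
lemma mI: "wr C m I = wl C I m0" and sI: "wr C s I = wl C I s0"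
  using cp unfolding compatible_def by auto

lemma m_assoc: "vcomp C m (wr C m S) = vcomp C m (wl C S m)"
  and m_unit1: "vcomp C m (wr C s S) = id2 C S"
  and m_unit2: "vcomp C m (wl C S s) = id2 C S"
  using mS unfolding monad_def by auto
lemma m0_assoc: "vcomp C m0 (wr C m0 S0) = vcomp C m0 (wl C S0 m0)"
  and m0_unit1: "vcomp C m0 (wr C s0 S0) = id2 C S0"
  and m0_unit2: "vcomp C m0 (wl C S0 s0) = id2 C S0"
  using mS0 unfolding monad_def by auto

lemma ext_simps[simp]:
  assumes "A \<in> arrs C" "B \<in> arrs C" "cod1 C A = X0" "cod1 C B = X0" "dom1 C A = dom1 C B"
    "k \<in> cells C" "src2 C k = comp1 C I A" "tgt2 C k = comp1 C T B"
  shows "ext A B k \<in> cells C" "src2 C (ext A B k) = comp1 C T A" "tgt2 C (ext A B k) = comp1 C T B"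
  using rm assms unfolding relmonad_def span_def cell2_def by auto

lemma ext_natAB:
  assumes "A \<in> arrs C" "B \<in> arrs C" "cod1 C A = X0" "cod1 C B = X0" "dom1 C A = dom1 C B"
    "A' \<in> arrs C" "B' \<in> arrs C" "cod1 C A' = X0" "cod1 C B' = X0" "dom1 C A' = dom1 C B'"
    "dom1 C A = dom1 C A'"
    "\<alpha> \<in> cells C" "src2 C \<alpha> = A'" "tgt2 C \<alpha> = A"
    "\<beta> \<in> cells C" "src2 C \<beta> = B" "tgt2 C \<beta> = B'"
    "k \<in> cells C" "src2 C k = comp1 C I A" "tgt2 C k = comp1 C T B"
  shows "ext A' B' (vcomp C (wl C T \<beta>) (vcomp C k (wl C I \<alpha>)))
          = vcomp C (wl C T \<beta>) (vcomp C (ext A B k) (wl C T \<alpha>))"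
  using rm assms unfolding relmonad_def span_def cell2_def by blast

lemma ext_unit:
  assumes "A \<in> arrs C" "B \<in> arrs C" "cod1 C A = X0" "cod1 C B = X0" "dom1 C A = dom1 C B"
    "k \<in> cells C" "src2 C k = comp1 C I A" "tgt2 C k = comp1 C T B"
  shows "vcomp C (ext A B k) (wr C t A) = k"
  using rm assms unfolding relmonad_def span_def cell2_def by blast

lemma isalgD:
  assumes "isalg C X0 S0 m0 s0 M \<mu>"
  shows "M \<in> arrs C" "cod1 C M = X0" "\<mu> \<in> cells C" "src2 C \<mu> = comp1 C S0 M" "tgt2 C \<mu> = M"
    "vcomp C \<mu> (wr C s0 M) = id2 C M" "vcomp C \<mu> (wl C S0 \<mu>) = vcomp C \<mu> (wr C m0 M)"
  using assms unfolding isalg_def cell2_def by auto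

lemma isalgD':
  assumes "isalg C X S m s M \<mu>"
  shows "M \<in> arrs C" "cod1 C M = X" "\<mu> \<in> cells C" "src2 C \<mu> = comp1 C S M" "tgt2 C \<mu> = M"
    "vcomp C \<mu> (wr C s M) = id2 C M" "vcomp C \<mu> (wl C S \<mu>) = vcomp C \<mu> (wr C m M)"
  using assms unfolding isalg_def cell2_def by auto

lemma isalg_free: "isalg C X0 S0 m0 s0 S0 m0"
  unfolding isalg_def cell2_def using m0_unit1 m0_assoc by simp

lemma isalg_wr:
  assumes a: "isalg C X0 S0 m0 s0 M \<mu>" and F: "F \<in> arrs C" "cod1 C F = dom1 C M"
  shows "isalg C X0 S0 m0 s0 (comp1 C M F) (wr C \<mu> F)"
proof -
  note D = isalgD[OF a]
  have u: "wr C (vcomp C \<mu> (wr C s0 M)) F = wr C (id2 C M) F" using D by simp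
  have as: "wr C (vcomp C \<mu> (wl C S0 \<mu>)) F = wr C (vcomp C \<mu> (wr C m0 M)) F" using D by simp
  show ?thesis unfolding isalg_def cell2_def using D(1-5) F u as by simp
qed

end


context tc begin
lemma vctx:
  assumes "vcomp C b c = vcomp C b' c'" "b \<in> cells C" "c \<in> cells C" "b' \<in> cells C" "c' \<in> cells C"
    "tgt2 C c = src2 C b" "tgt2 C c' = src2 C b'" "src2 C c' = src2 C c"
    "r \<in> cells C" "tgt2 C r = src2 C c"
  shows "vcomp C b (vcomp C c r) = vcomp C b' (vcomp C c' r)"
proof -
  have "vcomp C (vcomp C b c) r = vcomp C b (vcomp C c r)" using assms(2-) by (intro vassoc) auto
  moreover have "vcomp C (vcomp C b' c') r = vcomp C b' (vcomp C c' r)" using assms(2-) by (intro vassoc) auto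
  ultimately show ?thesis using assms(1) by metis
qed
lemma vctx1:
  assumes "vcomp C b c = e" "b \<in> cells C" "c \<in> cells C"
    "tgt2 C c = src2 C b" "r \<in> cells C" "tgt2 C r = src2 C c"
  shows "vcomp C b (vcomp C c r) = vcomp C e r"
proof -
  have "vcomp C (vcomp C b c) r = vcomp C b (vcomp C c r)" using assms(2-) by (intro vassoc) auto
  thus ?thesis using assms(1) by metis
qed
end

locale distl = setting +
  fixes d assumes rd: "reldist C X0 I T ext t S m s S0 m0 s0 d"
begin

lemma d_simps[simp]: "d \<in> cells C" "src2 C d = comp1 C S T" "tgt2 C d = comp1 C T S0"
  using rd unfolding reldist_def cell2_def by auto

lemma D1: "vcomp C d (wr C m T) = vcomp C (wl C T m0) (vcomp C (wr C d S0) (wl C S d))"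
  and D2: "vcomp C d (wr C s T) = wl C T s0"
  and D4: "vcomp C d (wl C S t) = wr C t S0"
  using rd unfolding reldist_def by auto

lemma D3: assumes "A \<in> arrs C" "B \<in> arrs C" "cod1 C A = X0" "cod1 C B = X0" "dom1 C A = dom1 C B"
    "f \<in> cells C" "src2 C f = comp1 C I A" "tgt2 C f = comp1 C T B"
  shows "vcomp C (wr C d B) (wl C S (ext A B f))
          = vcomp C (ext (comp1 C S0 A) (comp1 C S0 B) (vcomp C (wr C d B) (wl C S f))) (wr C d A)"
  using rd assms unfolding reldist_def span_def cell2_def by blast

abbreviation "L \<equiv> lift_of_dist C X0 T S0 m0 s0 d"

lemma L_alg: "isalg C X0 S0 m0 s0 M \<mu> \<Longrightarrow> L M \<mu> = vcomp C (wl C T \<mu>) (wr C d M)"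
  unfolding lift_of_dist_def by simp

lemma P_isalg:
  assumes a: "isalg C X0 S0 m0 s0 M \<mu>"
  shows "isalg C X S m s (comp1 C T M) (L M \<mu>)"
proof -
  note D = isalgD[OF a]
  note Dt[simp] = D(1-5)
  have e1: "wr C (vcomp C d (wr C s T)) M = wr C (wl C T s0) M" using D2 by simp
  then have e1': "vcomp C (wr C d M) (wr C s (comp1 C T M)) = wl C T (wr C s0 M)" by simp
  have e2: "wl C T (vcomp C \<mu> (wr C s0 M)) = wl C T (id2 C M)" using D by simp
  then have e2': "vcomp C (wl C T \<mu>) (wl C T (wr C s0 M)) = id2 C (comp1 C T M)" by simp
  have x1: "vcomp C (wl C (comp1 C T S0) \<mu>) (wr C d (comp1 C S0 M)) = vcomp C (wr C d M) (wl C (comp1 C S T) \<mu>)"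
    using xch[of \<mu> d] by simp
  have x2: "wr C (vcomp C d (wr C m T)) M = wr C (vcomp C (wl C T m0) (vcomp C (wr C d S0) (wl C S d))) M"
    using D1 by simp
  then have x2': "vcomp C (wr C d M) (wr C m (comp1 C T M)) = vcomp C (wl C T (wr C m0 M)) (vcomp C (wr C d (comp1 C S0 M)) (wl C S (wr C d M)))"
    by simp
  have x3: "wl C T (vcomp C \<mu> (wl C S0 \<mu>)) = wl C T (vcomp C \<mu> (wr C m0 M))" using D by simp
  then have x3': "vcomp C (wl C T \<mu>) (wl C (comp1 C T S0) \<mu>) = vcomp C (wl C T \<mu>) (wl C T (wr C m0 M))" by simp
  note x1c = vctx[OF x1[symmetric], simplified]
  note x3c = vctx[OF x3', simplified]
  have mult: "vcomp C (L M \<mu>) (wl C S (L M \<mu>)) = vcomp C (L M \<mu>) (wr C m (comp1 C T M))"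
    unfolding L_alg[OF a] by (simp add: x1c x3c x2')
  have unit: "vcomp C (L M \<mu>) (wr C s (comp1 C T M)) = id2 C (comp1 C T M)"
    unfolding L_alg[OF a] by (simp add: e1' e2')
  show ?thesis unfolding isalg_def cell2_def L_alg[OF a] using mult unit unfolding L_alg[OF a] by simp
qed

lemma P_fun:
  assumes a: "isalg C X0 S0 m0 s0 M \<mu>" and b: "isalg C X0 S0 m0 s0 N \<nu>"
    and f: "algmor C S0 M \<mu> N \<nu> f"
  shows "algmor C S (comp1 C T M) (L M \<mu>) (comp1 C T N) (L N \<nu>) (wl C T f)"
proof -
  note Da[simp] = isalgD(1-5)[OF a]
  note Db[simp] = isalgD(1-5)[OF b]
  have ft[simp]: "f \<in> cells C" "src2 C f = M" "tgt2 C f = N" and fe: "vcomp C f \<mu> = vcomp C \<nu> (wl C S0 f)"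
    using f unfolding algmor_def cell2_def by auto
  have [simp]: "dom1 C N = dom1 C M" using cell_simps(3)[of f] by simp
  have x1: "vcomp C (wl C (comp1 C T S0) f) (wr C d M) = vcomp C (wr C d N) (wl C (comp1 C S T) f)"
    using xch[of f d] by simp
  have e: "wl C T (vcomp C f \<mu>) = wl C T (vcomp C \<nu> (wl C S0 f))" using fe by simp
  then have e': "vcomp C (wl C T f) (wl C T \<mu>) = vcomp C (wl C T \<nu>) (wl C (comp1 C T S0) f)" by simp
  note ec = vctx[OF e', simplified]
  show ?thesis unfolding algmor_def cell2_def L_alg[OF a] L_alg[OF b]
    by (simp add: ec x1)
qed

lemma P_nat:
  assumes a: "isalg C X0 S0 m0 s0 M \<mu>" and F: "F \<in> arrs C" "cod1 C F = dom1 C M"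
  shows "L (comp1 C M F) (wr C \<mu> F) = wr C (L M \<mu>) F"
proof -
  note Da[simp] = isalgD(1-5)[OF a]
  show ?thesis unfolding L_alg[OF a] L_alg[OF isalg_wr[OF a F]] using F by simp
qed

lemma P_b:
  assumes a: "isalg C X0 S0 m0 s0 M \<mu>"
  shows "vcomp C (wr C t M) (wl C I \<mu>) = vcomp C (L M \<mu>) (wl C S (wr C t M))"
proof -
  note Da[simp] = isalgD(1-5)[OF a]
  have e: "wr C (vcomp C d (wl C S t)) M = wr C (wr C t S0) M" using D4 by simp
  then have e': "vcomp C (wr C d M) (wl C S (wr C t M)) = wr C t (comp1 C S0 M)" by simp
  have x1: "vcomp C (wl C T \<mu>) (wr C t (comp1 C S0 M)) = vcomp C (wr C t M) (wl C I \<mu>)"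
    using xch[of \<mu> t] by simp
  show ?thesis unfolding L_alg[OF a] by (simp add: e' x1)
qed

lemma P_a:
  assumes a: "isalg C X0 S0 m0 s0 M \<mu>" and b: "isalg C X0 S0 m0 s0 N \<nu>" and dm: "dom1 C M = dom1 C N"
    and f: "f \<in> cells C" "src2 C f = comp1 C I M" "tgt2 C f = comp1 C T N"
    and fe: "vcomp C f (wl C I \<mu>) = vcomp C (L N \<nu>) (wl C S f)"
  shows "vcomp C (ext M N f) (L M \<mu>) = vcomp C (L N \<nu>) (wl C S (ext M N f))"
proof -
  note Da[simp] = isalgD(1-5)[OF a]
  note Db[simp] = isalgD(1-5)[OF b]
  note ft[simp] = f dm
  have fe': "vcomp C f (wl C I \<mu>) = vcomp C (wl C T \<nu>) (vcomp C (wr C d N) (wl C S f))"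
    using fe unfolding L_alg[OF b] by simp
  have n1: "ext (comp1 C S0 M) N (vcomp C (wl C T (id2 C N)) (vcomp C f (wl C I \<mu>)))
      = vcomp C (wl C T (id2 C N)) (vcomp C (ext M N f) (wl C T \<mu>))"
    by (rule ext_natAB) auto
  hence n1': "ext (comp1 C S0 M) N (vcomp C f (wl C I \<mu>)) = vcomp C (ext M N f) (wl C T \<mu>)"
    by simp
  have n2: "ext (comp1 C S0 M) N (vcomp C (wl C T \<nu>) (vcomp C (vcomp C (wr C d N) (wl C S f)) (wl C I (id2 C (comp1 C S0 M)))))
      = vcomp C (wl C T \<nu>) (vcomp C (ext (comp1 C S0 M) (comp1 C S0 N) (vcomp C (wr C d N) (wl C S f))) (wl C T (id2 C (comp1 C S0 M))))"
    by (rule ext_natAB) auto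
  hence n2': "ext (comp1 C S0 M) N (vcomp C (wl C T \<nu>) (vcomp C (wr C d N) (wl C S f)))
      = vcomp C (wl C T \<nu>) (ext (comp1 C S0 M) (comp1 C S0 N) (vcomp C (wr C d N) (wl C S f)))"
    by simp
  have d3: "vcomp C (wr C d N) (wl C S (ext M N f))
          = vcomp C (ext (comp1 C S0 M) (comp1 C S0 N) (vcomp C (wr C d N) (wl C S f))) (wr C d M)"
    by (rule D3) auto
  have "vcomp C (ext M N f) (L M \<mu>) = vcomp C (vcomp C (ext M N f) (wl C T \<mu>)) (wr C d M)"
    unfolding L_alg[OF a] by simp
  also have "\<dots> = vcomp C (ext (comp1 C S0 M) N (vcomp C (wl C T \<nu>) (vcomp C (wr C d N) (wl C S f)))) (wr C d M)"
    using n1' fe' by simp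
  also have "\<dots> = vcomp C (wl C T \<nu>) (vcomp C (ext (comp1 C S0 M) (comp1 C S0 N) (vcomp C (wr C d N) (wl C S f))) (wr C d M))"
    unfolding n2' by simp
  also have "\<dots> = vcomp C (L N \<nu>) (wl C S (ext M N f))"
    unfolding L_alg[OF b] d3[symmetric] by simp
  finally show ?thesis .
qed

theorem part1: "lifting C X0 X I T ext t S m s S0 m0 s0 L"
  unfolding lifting_def
proof (intro conjI allI impI)
  fix M \<mu> assume "\<not> isalg C X0 S0 m0 s0 M \<mu>" thus "L M \<mu> = undefined"
    unfolding lift_of_dist_def by simp
next
  fix M \<mu> assume "isalg C X0 S0 m0 s0 M \<mu>" thus "isalg C X S m s (comp1 C T M) (L M \<mu>)"
    by (rule P_isalg)
next
  fix M \<mu> N \<nu> f assume "isalg C X0 S0 m0 s0 M \<mu> \<and> isalg C X0 S0 m0 s0 N \<nu> \<and> algmor C S0 M \<mu> N \<nu> f"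
  thus "algmor C S (comp1 C T M) (L M \<mu>) (comp1 C T N) (L N \<nu>) (wl C T f)"
    using P_fun by blast
next
  fix M \<mu> F assume "isalg C X0 S0 m0 s0 M \<mu> \<and> F \<in> arrs C \<and> cod1 C F = dom1 C M"
  thus "L (comp1 C M F) (wr C \<mu> F) = wr C (L M \<mu>) F" using P_nat by blast
next
  fix M \<mu> N \<nu> f assume h: "isalg C X0 S0 m0 s0 M \<mu> \<and> isalg C X0 S0 m0 s0 N \<nu> \<and> dom1 C M = dom1 C N
        \<and> cell2 C f (comp1 C I M) (comp1 C T N)
        \<and> vcomp C f (wl C I \<mu>) = vcomp C (L N \<nu>) (wl C S f)"
  thus "vcomp C (ext M N f) (L M \<mu>) = vcomp C (L N \<nu>) (wl C S (ext M N f))"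
    using P_a unfolding cell2_def by blast
next
  fix M \<mu> assume "isalg C X0 S0 m0 s0 M \<mu>"
  thus "vcomp C (wr C t M) (wl C I \<mu>) = vcomp C (L M \<mu>) (wl C S (wr C t M))" by (rule P_b)
qed

theorem part3: "dist_of_lift C S T S0 m0 s0 L = d"
proof -
  have x1: "vcomp C (wr C d S0) (wl C (comp1 C S T) s0) = vcomp C (wl C (comp1 C T S0) s0) d"
    using xch[of s0 d] by simp
  have e: "wl C T (vcomp C m0 (wl C S0 s0)) = wl C T (id2 C S0)" using m0_unit2 by simp
  hence e': "vcomp C (wl C T m0) (wl C (comp1 C T S0) s0) = id2 C (comp1 C T S0)" by simp
  note ec = vctx1[OF e', simplified]
  show ?thesis unfolding dist_of_lift_def L_alg[OF isalg_free] by (simp add: x1 ec)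
qed

end


locale liftl = setting +
  fixes L assumes lf: "lifting C X0 X I T ext t S m s S0 m0 s0 L"
begin

lemmas LL = lf[unfolded lifting_def]
lemmas l1 = LL[THEN conjunct1]
lemmas l2 = LL[THEN conjunct2, THEN conjunct1]
lemmas l3 = LL[THEN conjunct2, THEN conjunct2, THEN conjunct1]
lemmas l4 = LL[THEN conjunct2, THEN conjunct2, THEN conjunct2, THEN conjunct1]
lemmas l5 = LL[THEN conjunct2, THEN conjunct2, THEN conjunct2, THEN conjunct2, THEN conjunct1]
lemmas l6 = LL[THEN conjunct2, THEN conjunct2, THEN conjunct2, THEN conjunct2, THEN conjunct2]

lemma Lu: "\<not> isalg C X0 S0 m0 s0 M \<mu> \<Longrightarrow> L M \<mu> = undefined"
  and Lalg: "isalg C X0 S0 m0 s0 M \<mu> \<Longrightarrow> isalg C X S m s (comp1 C T M) (L M \<mu>)"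
  and Lfun: "isalg C X0 S0 m0 s0 M \<mu> \<Longrightarrow> isalg C X0 S0 m0 s0 N \<nu> \<Longrightarrow> algmor C S0 M \<mu> N \<nu> f \<Longrightarrow>
        algmor C S (comp1 C T M) (L M \<mu>) (comp1 C T N) (L N \<nu>) (wl C T f)"
  and Lnat: "isalg C X0 S0 m0 s0 M \<mu> \<Longrightarrow> F \<in> arrs C \<Longrightarrow> cod1 C F = dom1 C M \<Longrightarrow>
        L (comp1 C M F) (wr C \<mu> F) = wr C (L M \<mu>) F"
  and La: "isalg C X0 S0 m0 s0 M \<mu> \<Longrightarrow> isalg C X0 S0 m0 s0 N \<nu> \<Longrightarrow> dom1 C M = dom1 C N
        \<Longrightarrow> f \<in> cells C \<Longrightarrow> src2 C f = comp1 C I M \<Longrightarrow> tgt2 C f = comp1 C T N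
        \<Longrightarrow> vcomp C f (wl C I \<mu>) = vcomp C (L N \<nu>) (wl C S f) \<Longrightarrow>
        vcomp C (ext M N f) (L M \<mu>) = vcomp C (L N \<nu>) (wl C S (ext M N f))"
  and Lb: "isalg C X0 S0 m0 s0 M \<mu> \<Longrightarrow>
        vcomp C (wr C t M) (wl C I \<mu>) = vcomp C (L M \<mu>) (wl C S (wr C t M))"
  subgoal using l1 by blast
  subgoal using l2 by blast
  subgoal using l3 by blast
  subgoal using l4 by blast
  subgoal using l5 unfolding cell2_def by blast
  subgoal using l6 by blast
  done

definition "lam = L S0 m0"

lemma lam_simps[simp]: "lam \<in> cells C" "src2 C lam = comp1 C S (comp1 C T S0)" "tgt2 C lam = comp1 C T S0"
  using isalgD'(3-5)[OF Lalg[OF isalg_free]] unfolding lam_def by simp_all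

lemma lam_unit: "vcomp C lam (wr C s (comp1 C T S0)) = id2 C (comp1 C T S0)"
  and lam_assoc: "vcomp C lam (wl C S lam) = vcomp C lam (wr C m (comp1 C T S0))"
  using isalgD'(6-7)[OF Lalg[OF isalg_free]] unfolding lam_def by simp_all

lemma lam_nat: "A \<in> arrs C \<Longrightarrow> cod1 C A = X0 \<Longrightarrow> L (comp1 C S0 A) (wr C m0 A) = wr C lam A"
  unfolding lam_def by (rule Lnat[OF isalg_free]) auto

lemma isalg_freeA: "A \<in> arrs C \<Longrightarrow> cod1 C A = X0 \<Longrightarrow> isalg C X0 S0 m0 s0 (comp1 C S0 A) (wr C m0 A)"
  by (rule isalg_wr[OF isalg_free]) auto

abbreviation "dd \<equiv> dist_of_lift C S T S0 m0 s0 L"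

lemma dd_eq: "dd = vcomp C lam (wl C (comp1 C S T) s0)"
  unfolding dist_of_lift_def lam_def ..

lemma dd_simps[simp]: "dd \<in> cells C" "src2 C dd = comp1 C S T" "tgt2 C dd = comp1 C T S0"
  unfolding dd_eq by simp_all

lemma Q2: "vcomp C dd (wr C s T) = wl C T s0"
proof -
  have x: "vcomp C (wl C (comp1 C S T) s0) (wr C s T) = vcomp C (wr C s (comp1 C T S0)) (wl C T s0)"
    using xch[of "wl C T s0" s] by simp
  note uc = vctx1[OF lam_unit, simplified]
  show ?thesis unfolding dd_eq by (simp add: x uc)
qed

lemma Q4: "vcomp C dd (wl C S t) = wr C t S0"
proof -
  have x0: "vcomp C (wl C T s0) t = vcomp C (wr C t S0) (wl C I s0)"
    using xch[of s0 t] by simp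
  have "wl C S (vcomp C (wl C T s0) t) = wl C S (vcomp C (wr C t S0) (wl C I s0))" using x0 by simp
  hence x: "vcomp C (wl C (comp1 C S T) s0) (wl C S t) = vcomp C (wl C S (wr C t S0)) (wl C (comp1 C I S0) s0)"
    by simp
  have b: "vcomp C (wr C t S0) (wl C I m0) = vcomp C lam (wl C S (wr C t S0))"
    using Lb[OF isalg_free] unfolding lam_def .
  note bc = vctx[OF b[symmetric], simplified]
  have "wl C I (vcomp C m0 (wl C S0 s0)) = wl C I (id2 C S0)" using m0_unit2 by simp
  hence u: "vcomp C (wl C I m0) (wl C (comp1 C I S0) s0) = id2 C (comp1 C I S0)" by simp
  show ?thesis unfolding dd_eq by (simp add: x bc u)
qed

lemma Q1: "vcomp C dd (wr C m T) = vcomp C (wl C T m0) (vcomp C (wr C dd S0) (wl C S dd))"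
proof -
  have am: "algmor C S0 (comp1 C S0 S0) (wr C m0 S0) S0 m0 m0"
    unfolding algmor_def cell2_def using m0_assoc by simp
  have "algmor C S (comp1 C T (comp1 C S0 S0)) (L (comp1 C S0 S0) (wr C m0 S0)) (comp1 C T S0) lam (wl C T m0)"
    using Lfun[OF isalg_freeA[of S0] isalg_free am] unfolding lam_def by simp
  hence f1: "vcomp C (wl C T m0) (wr C lam S0) = vcomp C lam (wl C (comp1 C S T) m0)"
    unfolding algmor_def lam_nat[of S0, simplified] by simp
  have "wl C (comp1 C S T) (vcomp C m0 (wr C s0 S0)) = wl C (comp1 C S T) (id2 C S0)" using m0_unit1 by simp
  hence f2: "vcomp C (wl C (comp1 C S T) m0) (wl C (comp1 C S T) (wr C s0 S0)) = id2 C (comp1 C S (comp1 C T S0))"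
    by simp
  have f4: "vcomp C (wl C (comp1 C S T) s0) (wr C m T) = vcomp C (wr C m (comp1 C T S0)) (wl C (comp1 C S (comp1 C S T)) s0)"
    using xch[of "wl C T s0" m] by simp
  note f1c = vctx[OF f1, simplified]
  note f2c = vctx1[OF f2, simplified]
  note f3c = vctx[OF lam_assoc, simplified]
  show ?thesis unfolding dd_eq by (simp add: f1c f2c f3c f4)
qed

lemma Q3:
  assumes A: "A \<in> arrs C" "cod1 C A = X0" and B: "B \<in> arrs C" "cod1 C B = X0" and AB: "dom1 C A = dom1 C B"
    and f: "f \<in> cells C" "src2 C f = comp1 C I A" "tgt2 C f = comp1 C T B"
  shows "vcomp C (wr C dd B) (wl C S (ext A B f))
          = vcomp C (ext (comp1 C S0 A) (comp1 C S0 B) (vcomp C (wr C dd B) (wl C S f))) (wr C dd A)"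
proof -
  note [simp] = A B AB f
  define g where "g = vcomp C (wr C dd B) (wl C S f)"
  have g_eq: "g = vcomp C (wr C lam B) (vcomp C (wl C (comp1 C S T) (wr C s0 B)) (wl C S f))"
    unfolding g_def dd_eq by simp
  have gt[simp]: "g \<in> cells C" "src2 C g = comp1 C I (comp1 C S0 A)" "tgt2 C g = comp1 C T (comp1 C S0 B)"
    unfolding g_def by simp_all
  have "wr C (wr C m I) A = wr C (wl C I m0) A" using mI by simp
  hence mIA: "wl C I (wr C m0 A) = wr C m (comp1 C I A)" by simp
  have "wr C (wr C s I) A = wr C (wl C I s0) A" using sI by simp
  hence sIA: "wl C I (wr C s0 A) = wr C s (comp1 C I A)" by simp
  define h where "h = vcomp C (wl C T (wr C s0 B)) f"
  have ht[simp]: "h \<in> cells C" "src2 C h = comp1 C I A" "tgt2 C h = comp1 C T (comp1 C S0 B)"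
    unfolding h_def by simp_all
  have xm: "vcomp C (wl C S h) (wr C m (comp1 C I A)) = vcomp C (wr C m (comp1 C T (comp1 C S0 B))) (wl C (comp1 C S S) h)"
    using xch[of h m] by simp
  hence xm': "vcomp C (wl C (comp1 C S T) (wr C s0 B)) (vcomp C (wl C S f) (wr C m (comp1 C I A)))
     = vcomp C (wr C m (comp1 C T (comp1 C S0 B))) (vcomp C (wl C (comp1 C S (comp1 C S T)) (wr C s0 B)) (wl C (comp1 C S S) f))"
    unfolding h_def by simp
  have "wr C (vcomp C lam (wl C S lam)) B = wr C (vcomp C lam (wr C m (comp1 C T S0))) B" using lam_assoc by simp
  hence la: "vcomp C (wr C lam B) (wl C S (wr C lam B)) = vcomp C (wr C lam B) (wr C m (comp1 C T (comp1 C S0 B)))" by simp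
  note lac = vctx[OF la[symmetric], simplified]
  have hypA: "vcomp C g (wl C I (wr C m0 A)) = vcomp C (L (comp1 C S0 B) (wr C m0 B)) (wl C S g)"
    unfolding lam_nat[OF B] g_eq mIA by (simp add: xm' lac)
  define E where "E = ext (comp1 C S0 A) (comp1 C S0 B) g"
  have Et[simp]: "E \<in> cells C" "src2 C E = comp1 C T (comp1 C S0 A)" "tgt2 C E = comp1 C T (comp1 C S0 B)"
    unfolding E_def by simp_all
  have stepB: "vcomp C E (wr C lam A) = vcomp C (wr C lam B) (wl C S E)"
    using La[OF isalg_freeA[OF A] isalg_freeA[OF B] _ gt hypA] unfolding E_def lam_nat[OF A] lam_nat[OF B]
    by simp
  have n1: "ext A (comp1 C S0 B) (vcomp C (wl C T (id2 C (comp1 C S0 B))) (vcomp C g (wl C I (wr C s0 A))))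
     = vcomp C (wl C T (id2 C (comp1 C S0 B))) (vcomp C E (wl C T (wr C s0 A)))"
    unfolding E_def by (rule ext_natAB) auto
  hence n1': "ext A (comp1 C S0 B) (vcomp C g (wl C I (wr C s0 A))) = vcomp C E (wl C T (wr C s0 A))"
    by simp
  have xs': "vcomp C (wl C (comp1 C S T) (wr C s0 B)) (vcomp C (wl C S f) (wr C s (comp1 C I A)))
     = vcomp C (wr C s (comp1 C T (comp1 C S0 B))) (vcomp C (wl C T (wr C s0 B)) f)"
  proof -
    have "vcomp C (wl C S h) (wr C s (comp1 C I A)) = vcomp C (wr C s (comp1 C T (comp1 C S0 B))) (wl C (id1 C X) h)"
      using xch[of h s] by simp
    thus ?thesis unfolding h_def by simp
  qed
  have "wr C (vcomp C lam (wr C s (comp1 C T S0))) B = wr C (id2 C (comp1 C T S0)) B" using lam_unit by simp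
  hence lu: "vcomp C (wr C lam B) (wr C s (comp1 C T (comp1 C S0 B))) = id2 C (comp1 C T (comp1 C S0 B))" by simp
  note luc = vctx1[OF lu, simplified]
  have stepD: "vcomp C g (wl C I (wr C s0 A)) = vcomp C (wl C T (wr C s0 B)) f"
    unfolding g_eq sIA by (simp add: xs' luc)
  have n2: "ext A (comp1 C S0 B) (vcomp C (wl C T (wr C s0 B)) (vcomp C f (wl C I (id2 C A))))
     = vcomp C (wl C T (wr C s0 B)) (vcomp C (ext A B f) (wl C T (id2 C A)))"
    by (rule ext_natAB) auto
  hence n2': "ext A (comp1 C S0 B) (vcomp C (wl C T (wr C s0 B)) f) = vcomp C (wl C T (wr C s0 B)) (ext A B f)"
    by simp
  have "vcomp C E (wr C dd A) = vcomp C (vcomp C E (wr C lam A)) (wl C (comp1 C S T) (wr C s0 A))"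
    unfolding dd_eq by simp
  also have "\<dots> = vcomp C (wr C lam B) (wl C S (vcomp C E (wl C T (wr C s0 A))))"
    unfolding stepB by simp
  also have "\<dots> = vcomp C (wr C lam B) (wl C S (vcomp C (wl C T (wr C s0 B)) (ext A B f)))"
    unfolding n1'[symmetric] stepD n2' ..
  also have "\<dots> = vcomp C (wr C dd B) (wl C S (ext A B f))"
    unfolding dd_eq by simp
  finally show ?thesis unfolding E_def g_def by simp
qed

theorem part2: "reldist C X0 I T ext t S m s S0 m0 s0 dd"
  unfolding reldist_def cell2_def span_def
  using Q1 Q2 Q4 Q3 by auto

theorem part4: "lift_of_dist C X0 T S0 m0 s0 dd = L"
proof (intro ext)
  fix M \<mu>
  show "lift_of_dist C X0 T S0 m0 s0 dd M \<mu> = L M \<mu>"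
  proof (cases "isalg C X0 S0 m0 s0 M \<mu>")
    case False thus ?thesis unfolding lift_of_dist_def using Lu by simp
  next
    case a: True
    note D[simp] = isalgD(1-5)[OF a]
    note LD[simp] = isalgD'(3-5)[OF Lalg[OF a]]
    have am: "algmor C S0 (comp1 C S0 M) (wr C m0 M) M \<mu> \<mu>"
      unfolding algmor_def cell2_def using isalgD(7)[OF a] by simp
    have "algmor C S (comp1 C T (comp1 C S0 M)) (L (comp1 C S0 M) (wr C m0 M)) (comp1 C T M) (L M \<mu>) (wl C T \<mu>)"
      using Lfun[OF isalg_freeA[OF D(1,2)] a am] .
    hence f1: "vcomp C (wl C T \<mu>) (wr C lam M) = vcomp C (L M \<mu>) (wl C (comp1 C S T) \<mu>)"
      unfolding algmor_def lam_nat[OF D(1,2)] by simp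
    have "wl C (comp1 C S T) (vcomp C \<mu> (wr C s0 M)) = wl C (comp1 C S T) (id2 C M)" using isalgD(6)[OF a] by simp
    hence f2: "vcomp C (wl C (comp1 C S T) \<mu>) (wl C (comp1 C S T) (wr C s0 M)) = id2 C (comp1 C S (comp1 C T M))"
      by simp
    note f1c = vctx[OF f1, simplified]
    note f2c = vctx1[OF f2, simplified]
    show ?thesis unfolding lift_of_dist_def dd_eq using a by (simp add: f1c f2)
  qed
qed

end

theorem mainTheorem12:
  fixes C :: "('o,'a,'c) twocat"
  assumes "twocat C" and "X0 \<in> obs C" and "X \<in> obs C"
    and "relmonad C X0 X I T ext t"
    and "monad C X S m s" and "monad C X0 S0 m0 s0"
    and "compatible C I S m s S0 m0 s0"
  shows "(\<forall>d. reldist C X0 I T ext t S m s S0 m0 s0 d \<longrightarrow>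
              lifting C X0 X I T ext t S m s S0 m0 s0 (lift_of_dist C X0 T S0 m0 s0 d))
       \<and> (\<forall>L. lifting C X0 X I T ext t S m s S0 m0 s0 L \<longrightarrow>
              reldist C X0 I T ext t S m s S0 m0 s0 (dist_of_lift C S T S0 m0 s0 L))
       \<and> (\<forall>d. reldist C X0 I T ext t S m s S0 m0 s0 d \<longrightarrow>
              dist_of_lift C S T S0 m0 s0 (lift_of_dist C X0 T S0 m0 s0 d) = d)
       \<and> (\<forall>L. lifting C X0 X I T ext t S m s S0 m0 s0 L \<longrightarrow>
              lift_of_dist C X0 T S0 m0 s0 (dist_of_lift C S T S0 m0 s0 L) = L)"
proof -
  interpret setting C X0 X I T ext t S m s S0 m0 s0
    using assms by (unfold_locales) auto
  show ?thesis
  proof (intro conjI allI impI)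
    fix d assume "reldist C X0 I T ext t S m s S0 m0 s0 d"
    then interpret distl C X0 X I T ext t S m s S0 m0 s0 d by unfold_locales
    show "lifting C X0 X I T ext t S m s S0 m0 s0 (lift_of_dist C X0 T S0 m0 s0 d)" by (rule part1)
  next
    fix L assume "lifting C X0 X I T ext t S m s S0 m0 s0 L"
    then interpret liftl C X0 X I T ext t S m s S0 m0 s0 L by unfold_locales
    show "reldist C X0 I T ext t S m s S0 m0 s0 (dist_of_lift C S T S0 m0 s0 L)" by (rule part2)
  next
    fix d assume "reldist C X0 I T ext t S m s S0 m0 s0 d"
    then interpret distl C X0 X I T ext t S m s S0 m0 s0 d by unfold_locales
    show "dist_of_lift C S T S0 m0 s0 (lift_of_dist C X0 T S0 m0 s0 d) = d" by (rule part3)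
  next
    fix L assume "lifting C X0 X I T ext t S m s S0 m0 s0 L"
    then interpret liftl C X0 X I T ext t S m s S0 m0 s0 L by unfold_locales
    show "lift_of_dist C X0 T S0 m0 s0 (dist_of_lift C S T S0 m0 s0 L) = L" by (rule part4)
  qed
qed

end
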